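(* Let $\{i,j,k\}=\{1,2,3\}$, let $S$ be a word directed toward $i$ and $T$ a word directed toward $j$ (with $i\neq j$). Then, up to applications of rule (8), the word $S^{-1}T$ has at most one factorization under the local algorithm $A$, and it is of the form $T_1S_1^{-1}$, where $S_1$ is directed toward $i$ and $T_1$ is directed toward $j$.
   Context: For distinct $a,b\in\{1,2,3\}$, $E_{ab}$ denotes the $3\times 3$ elementary matrix that differs from the identity by an entry $1$ at position $(a,b)$, and $E_{ab}^{-1}$ its inverse; for a permutation $(a,b,c)$ of $(1,2,3)$, $R_{abc}$ denotes the symbol of the cyclic permutation $r$ of indices with $c\mapsto b\mapsto a\mapsto c$. For a word $S=X_1\cdots X_n$ of letters $E_{ab}$, $S^{-1}=X_n^{-1}\cdots X_1^{-1}$. A word is directed toward $i$ if it consists only of letters $E_{ij}$ and $E_{ik}$ ($\{i,j,k\}=\{1,2,3\}$). Local algorithm $A$ acts on finite words by repeatedly replacing subwords by the rules (for $\{i,j,k\}=\{1,2,3\}$): (1) $E^{-1}_{ij}E_{ji}\Rightarrow$ stop; (2) $E^{-1}_{ij}E_{ij}\Rightarrow 1$; (3) $E^{-1}_{ij}E_{kj}\Rightarrow E_{kj}E^{-1}_{ij}$; (4) $E^{-1}_{ij}E_{jk}\Rightarrow E_{jk}E^{-1}_{ik}E^{-1}_{ij}$; (5) $E^{-1}_{ij}E_{ki}\Rightarrow E_{ki}E_{kj}E^{-1}_{ij}$; (6a) $E^{-1}_{ij}E_{ik}\Rightarrow E_{ik}E^{-1}_{ij}$ or alternatively (6b) $E^{-1}_{ij}E_{ik}\Rightarrow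 E_{ki}E_{jk}R_{kji}E^{-1}_{kj}E^{-1}_{ji}$; (7) $R_{kji}E_{lm}^{\pm1}\Rightarrow E_{r(l)r(m)}^{\pm1}R_{kji}$ with $r:i\mapsto j\mapsto k\mapsto i$. In addition the rule (8) $E_{ij}E_{ik}\Rightarrow E_{ik}E_{ij}$ may be used. Permutation symbols can be moved using rule (7). The order of places at which rules are applied is fixed; the only choices are between (6a) and (6b). A factorization of a word $W$ is the final word of a run of the algorithm on $W$ that terminates without applying rule (1), i.e. ends with a word $T'S'^{-1}$ where $T'$ contains no inverse letters and $S'$ consists of letters $E_{ab}$. *)

theory Defs
  imports Main
begin

datatype idx = I1 | I2 | I3

text \<open>E a b is the elementary matrix E_ab, Einv a b its inverse E_ab^{-1},
  and R a b c is the permutation symbol R_abc (cyclic permutation c -> b -> a -> c).\<close>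
datatype letter = E idx idx | Einv idx idx | R idx idx idx

type_synonym word = "letter list"

definition cyc :: "idx \<Rightarrow> idx \<Rightarrow> idx \<Rightarrow> idx \<Rightarrow> idx" where
  "cyc a b c x = (if x = c then b else if x = b then a else c)"

fun inv_letter :: "letter \<Rightarrow> letter" where
  "inv_letter (E a b) = Einv a b"
| "inv_letter (Einv a b) = E a b"
| "inv_letter (R a b c) = R a b c"

definition inv_word :: "word \<Rightarrow> word" where
  "inv_word S = rev (map inv_letter S)"

definition is_E :: "letter \<Rightarrow> bool" where
  "is_E x \<longleftrightarrow> (\<exists>a b. a \<noteq> b \<and> x = E a b)"

definition is_Einv :: "letter \<Rightarrow> bool" where
  "is_Einv x \<longleftrightarrow> (\<exists>a b. x = Einv a b)"

definition E_word :: "word \<Rightarrow> bool" where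
  "E_word S \<longleftrightarrow> (\<forall>x\<in>set S. is_E x)"

definition directed :: "idx \<Rightarrow> word \<Rightarrow> bool" where
  "directed i S \<longleftrightarrow> (\<forall>x\<in>set S. \<exists>j. j \<noteq> i \<and> x = E i j)"

text \<open>Rule (1): the stop pattern.\<close>
definition stop_pat :: "letter \<Rightarrow> letter \<Rightarrow> bool" where
  "stop_pat x y \<longleftrightarrow> (\<exists>i j. i \<noteq> j \<and> x = Einv i j \<and> y = E j i)"

text \<open>Rules (2)--(7) (both alternatives (6a) and (6b)); arule x y rhs means the
  two-letter subword x y may be replaced by rhs.\<close>
inductive arule :: "letter \<Rightarrow> letter \<Rightarrow> word \<Rightarrow> bool" where
  r2:  "distinct [i, j, k] \<Longrightarrow> arule (Einv i j) (E i j) []"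
| r3:  "distinct [i, j, k] \<Longrightarrow> arule (Einv i j) (E k j) [E k j, Einv i j]"
| r4:  "distinct [i, j, k] \<Longrightarrow> arule (Einv i j) (E j k) [E j k, Einv i k, Einv i j]"
| r5:  "distinct [i, j, k] \<Longrightarrow> arule (Einv i j) (E k i) [E k i, E k j, Einv i j]"
| r6a: "distinct [i, j, k] \<Longrightarrow> arule (Einv i j) (E i k) [E i k, Einv i j]"
| r6b: "distinct [i, j, k] \<Longrightarrow>
          arule (Einv i j) (E i k) [E k i, E j k, R k j i, Einv k j, Einv j i]"
| r7p: "distinct [i, j, k] \<Longrightarrow>
          arule (R k j i) (E l m) [E (cyc k j i l) (cyc k j i m), R k j i]"
| r7n: "distinct [i, j, k] \<Longrightarrow>
          arule (R k j i) (Einv l m) [Einv (cyc k j i l) (cyc k j i m), R k j i]"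

definition redex :: "word \<Rightarrow> nat \<Rightarrow> bool" where
  "redex w p \<longleftrightarrow> Suc p < length w \<and>
     (stop_pat (w ! p) (w ! Suc p) \<or> (\<exists>rhs. arule (w ! p) (w ! Suc p) rhs))"

definition replace_at :: "word \<Rightarrow> nat \<Rightarrow> word \<Rightarrow> word" where
  "replace_at w p rhs = take p w @ rhs @ drop (Suc (Suc p)) w"

definition rule8 :: "word \<Rightarrow> word \<Rightarrow> bool" where
  "rule8 w w' \<longleftrightarrow> (\<exists>p i j k. distinct [i, j, k] \<and> Suc p < length w \<and>
      w ! p = E i j \<and> w ! Suc p = E i k \<and> w' = replace_at w p [E i k, E i j])"

definition eq8 :: "word \<Rightarrow> word \<Rightarrow> bool" where
  "eq8 = rule8\<^sup>*\<^sup>*"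

text \<open>A fixed order of places: sel w is the place at which the next rule is
  applied; it must be a place where a rule applies whenever there is one.\<close>
definition admissible_order :: "(word \<Rightarrow> nat) \<Rightarrow> bool" where
  "admissible_order sel \<longleftrightarrow> (\<forall>w. (\<exists>p. redex w p) \<longrightarrow> redex w (sel w))"

text \<open>One step of algorithm A with order sel: apply a rule (2)--(7) at the
  prescribed place (the only choice being (6a) versus (6b)), or apply rule (8).
  Rule (1) is not a step: a run reaching it stops without a factorization.\<close>
definition astep :: "(word \<Rightarrow> nat) \<Rightarrow> word \<Rightarrow> word \<Rightarrow> bool" where
  "astep sel w w' \<longleftrightarrow>
     (Suc (sel w) < length w \<and>
      (\<exists>rhs. arule (w ! sel w) (w ! Suc (sel w)) rhs \<and> w' = replace_at w (sel w) rhs))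
     \<or> rule8 w w'"

definition terminal :: "word \<Rightarrow> bool" where
  "terminal w \<longleftrightarrow> (\<forall>p. \<not> redex w p)"

definition factorization :: "(word \<Rightarrow> nat) \<Rightarrow> word \<Rightarrow> word \<Rightarrow> bool" where
  "factorization sel W F \<longleftrightarrow> (astep sel)\<^sup>*\<^sup>* W F \<and> terminal F \<and>
     (\<exists>T' S'. F = T' @ inv_word S' \<and> (\<forall>x\<in>set T'. \<not> is_Einv x) \<and> E_word S')"

end

theory Submission
  imports Defs
begin

lemma idx3: "distinct [i,j,k] \<Longrightarrow> (x::idx) = i \<or> x = j \<or> x = k"
  by (cases i; cases j; cases k; cases x) auto

lemma ex_third: "(i::idx) \<noteq> j \<Longrightarrow> \<exists>k. distinct [i,j,k]"
  by (cases i; cases j) (auto intro: exI[of _ I1] exI[of _ I2] exI[of _ I3])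

definition Alph :: "idx \<Rightarrow> idx \<Rightarrow> idx \<Rightarrow> letter set" where
  "Alph i j k = {Einv i j, Einv i k, E j i, E j k}"

definition Rl :: "idx \<Rightarrow> idx \<Rightarrow> idx \<Rightarrow> letter \<Rightarrow> letter \<Rightarrow> word \<Rightarrow> bool" where
  "Rl i j k x y r \<longleftrightarrow>
     (x = Einv i j \<and> y = E j k \<and> r = [E j k, Einv i k, Einv i j]) \<or>
     (x = Einv i k \<and> y = E j i \<and> r = [E j i, E j k, Einv i k]) \<or>
     (x = Einv i k \<and> y = E j k \<and> r = [E j k, Einv i k]) \<or>
     (x = E j i \<and> y = E j k \<and> r = [E j k, E j i]) \<or>
     (x = E j k \<and> y = E j i \<and> r = [E j i, E j k])"

lemma arule_Rl:
  assumes d: "distinct [i,j,k]" and x: "x \<in> Alph i j k" and y: "y \<in> Alph i j k"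
    and a: "arule x y r"
  shows "Rl i j k x y r"
  using a x y d unfolding Alph_def Rl_def
  by (elim arule.cases) auto

lemma rule8_Rl:
  assumes d: "distinct [i,j,k]" and x: "E a b \<in> Alph i j k" and y: "E a c \<in> Alph i j k"
    and "distinct [a,b,c]"
  shows "Rl i j k (E a b) (E a c) [E a c, E a b]"
  using assms unfolding Alph_def Rl_def by auto

lemma split_at: "Suc p < length w \<Longrightarrow>
   w = take p w @ w ! p # w ! Suc p # drop (Suc (Suc p)) w"
  by (metis Cons_nth_drop_Suc Suc_lessD append_take_drop_id)

lemma step_local:
  assumes d: "distinct [i,j,k]" and st: "astep sel w w'" and A: "set w \<subseteq> Alph i j k"
  shows "\<exists>u x y v r. w = u @ x # y # v \<and> w' = u @ r @ v \<and> Rl i j k x y r"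
  using st unfolding astep_def
proof
  assume h: "Suc (sel w) < length w \<and>
      (\<exists>rhs. arule (w ! sel w) (w ! Suc (sel w)) rhs \<and> w' = replace_at w (sel w) rhs)"
  then obtain rhs where h1: "Suc (sel w) < length w" and h2: "arule (w ! sel w) (w ! Suc (sel w)) rhs"
    and h3: "w' = replace_at w (sel w) rhs" by blast
  have "w ! sel w \<in> Alph i j k" "w ! Suc (sel w) \<in> Alph i j k"
    using A h1 by (auto simp: subset_iff)
  then have "Rl i j k (w ! sel w) (w ! Suc (sel w)) rhs" using arule_Rl[OF d] h2 by blast
  then show ?thesis using split_at[OF h1] h3 unfolding replace_at_def by blast
next
  assume "rule8 w w'"
  then obtain p a b c where h: "distinct [a,b,c]" "Suc p < length w" "w ! p = E a b"
    "w ! Suc p = E a c" "w' = replace_at w p [E a c, E a b]" unfolding rule8_def by blast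
  have "w ! p \<in> Alph i j k" "w ! Suc p \<in> Alph i j k"
    using A h(2) by (auto simp: subset_iff)
  then have "Rl i j k (E a b) (E a c) [E a c, E a b]" using rule8_Rl[OF d _ _ h(1)] h by simp
  then show ?thesis using split_at[OF h(2)] h unfolding replace_at_def by metis
qed

lemma Rl_set: "Rl i j k x y r \<Longrightarrow> set r \<subseteq> Alph i j k"
  unfolding Rl_def Alph_def by auto

lemma reach_inv:
  assumes r: "(astep sel)\<^sup>*\<^sup>* W F" and d: "distinct [i,j,k]"
    and A: "set W \<subseteq> Alph i j k" and P: "P W"
    and pres: "\<And>u x y v r. Rl i j k x y r \<Longrightarrow> P (u @ x # y # v) \<Longrightarrow> P (u @ r @ v)"
  shows "P F \<and> set F \<subseteq> Alph i j k"
  using r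
proof (induction rule: rtranclp_induct)
  case base then show ?case using A P by simp
next
  case (step y z)
  then obtain u a b v r where h: "y = u @ a # b # v" "z = u @ r @ v" "Rl i j k a b r"
    using step_local[OF d] by blast
  then show ?case using step Rl_set[OF h(3)] pres[OF h(3)] by auto
qed

lemma terminal_split:
  assumes d: "distinct [i,j,k]" and t: "terminal F" and A: "set F \<subseteq> Alph i j k"
  shows "\<exists>bs as. F = bs @ as \<and> set bs \<subseteq> {E j i, E j k} \<and> set as \<subseteq> {Einv i j, Einv i k}"
proof -
  have noab: "\<And>u x y v. F = u @ x # y # v \<Longrightarrow> x \<in> {Einv i j, Einv i k} \<Longrightarrow> y \<in> {E j i, E j k} \<Longrightarrow> False"
  proof -
    fix u x y v assume F: "F = u @ x # y # v" and x: "x \<in> {Einv i j, Einv i k}"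
      and y: "y \<in> {E j i, E j k}"
    have "stop_pat x y \<or> (\<exists>r. arule x y r)"
    proof -
      have d1: "distinct [i,k,j]" using d by auto
      show ?thesis using x y
      proof (elim insertE emptyE)
        assume "x = Einv i j" "y = E j i" then show ?thesis
          using d unfolding stop_pat_def by auto
      next
        assume "x = Einv i j" "y = E j k" then show ?thesis using arule.r4[OF d] by blast
      next
        assume "x = Einv i k" "y = E j i" then show ?thesis using arule.r5[OF d1] by blast
      next
        assume "x = Einv i k" "y = E j k" then show ?thesis using arule.r3[OF d1] by blast
      qed
    qed
    then have "redex F (length u)" unfolding redex_def using F by (simp add: nth_append)
    then show False using t unfolding terminal_def by blast
  qed
  have "\<And>G. set G \<subseteq> Alph i j k \<Longrightarrow>
     (\<forall>u x y v. G = u @ x # y # v \<longrightarrow> x \<in> {Einv i j, Einv i k} \<longrightarrow> y \<in> {E j i, E j k} \<longrightarrow> False) \<Longrightarrow>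
     \<exists>bs as. G = bs @ as \<and> set bs \<subseteq> {E j i, E j k} \<and> set as \<subseteq> {Einv i j, Einv i k}"
  proof -
    fix G show "set G \<subseteq> Alph i j k \<Longrightarrow>
     (\<forall>u x y v. G = u @ x # y # v \<longrightarrow> x \<in> {Einv i j, Einv i k} \<longrightarrow> y \<in> {E j i, E j k} \<longrightarrow> False) \<Longrightarrow>
     \<exists>bs as. G = bs @ as \<and> set bs \<subseteq> {E j i, E j k} \<and> set as \<subseteq> {Einv i j, Einv i k}"
    proof (induction G)
      case Nil then show ?case by auto
    next
      case (Cons z G)
      have "\<forall>u x y v. G = u @ x # y # v \<longrightarrow> x \<in> {Einv i j, Einv i k} \<longrightarrow> y \<in> {E j i, E j k} \<longrightarrow> False"
        using Cons.prems(2) by (metis append_Cons)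
      then obtain bs as where h: "G = bs @ as" "set bs \<subseteq> {E j i, E j k}" "set as \<subseteq> {Einv i j, Einv i k}"
        using Cons by auto
      have z: "z \<in> Alph i j k" using Cons.prems(1) by auto
      show ?case
      proof (cases "z \<in> {E j i, E j k}")
        case True then show ?thesis using h by (intro exI[of _ "z # bs"] exI[of _ as]) auto
      next
        case False
        then have zA: "z \<in> {Einv i j, Einv i k}" using z unfolding Alph_def by auto
        show ?thesis
        proof (cases bs)
          case Nil then show ?thesis using h zA by (intro exI[of _ "[]"] exI[of _ "z # as"]) auto
        next
          case (Cons b bs')
          then have "z # G = [] @ z # b # (bs' @ as)" using h by simp
          moreover have "b \<in> {E j i, E j k}" using h Cons by auto
          ultimately show ?thesis using Cons.prems(2) zA by blast
        qed
      qed
    qed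
  qed
  then show ?thesis using A noab by blast
qed

fun hasAB :: "letter \<Rightarrow> letter \<Rightarrow> word \<Rightarrow> bool" where
  "hasAB a b [] = False"
| "hasAB a b (z # zs) = ((z = a \<and> b \<in> set zs) \<or> hasAB a b zs)"

lemma hasAB_append: "hasAB a b (u @ v) = (hasAB a b u \<or> hasAB a b v \<or> (a \<in> set u \<and> b \<in> set v))"
  by (induction u) auto

fun cntAB :: "letter \<Rightarrow> letter \<Rightarrow> word \<Rightarrow> nat" where
  "cntAB a b [] = 0"
| "cntAB a b (z # zs) = (if z = a then count_list zs b else 0) + cntAB a b zs"

lemma cntAB_append: "cntAB a b (u @ v) = cntAB a b u + cntAB a b v + count_list u a * count_list v b"
  by (induction u) (auto simp: algebra_simps)

fun phi :: "letter \<Rightarrow> letter \<Rightarrow> letter \<Rightarrow> nat \<Rightarrow> word \<Rightarrow> word" where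
  "phi a2 a3 b3 c [] = []"
| "phi a2 a3 b3 c (z # zs) = (if z = a2 then replicate (count_list zs b3 + c) a3 @ [a2]
      else if z = a3 then [a3] else []) @ phi a2 a3 b3 c zs"

lemma phi_append: "phi a2 a3 b3 c (u @ v) = phi a2 a3 b3 (c + count_list v b3) u @ phi a2 a3 b3 c v"
  by (induction u) (auto simp: algebra_simps)


lemma hasAB_notin1: "a \<notin> set w \<Longrightarrow> \<not> hasAB a b w" by (induction w) auto
lemma hasAB_notin2: "b \<notin> set w \<Longrightarrow> \<not> hasAB a b w" by (induction w) auto
lemma cntAB_notin1: "a \<notin> set w \<Longrightarrow> cntAB a b w = 0" by (induction w) auto
lemma cnt0: "a \<notin> set w \<Longrightarrow> count_list w a = 0" by (induction w) auto
lemma cntAB_notin2: "b \<notin> set w \<Longrightarrow> cntAB a b w = 0" by (induction w) (auto simp: cnt0)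
lemma rep_of: "set w \<subseteq> {a} \<Longrightarrow> w = replicate (count_list w a) a" by (induction w) auto
lemma phi_noA: "a2 \<notin> set w \<Longrightarrow> a3 \<notin> set w \<Longrightarrow> phi a2 a3 b3 c w = []" by (induction w) auto
lemma phi_noB: "b3 \<notin> set w \<Longrightarrow> set w \<subseteq> {a2, a3} \<Longrightarrow> phi a2 a3 b3 0 w = w"
  by (induction w) (auto simp: cnt0)

lemma caseC:
  assumes d: "distinct [i,j,k]" and r: "(astep sel)\<^sup>*\<^sup>* W F" and A: "set W \<subseteq> Alph i j k"
    and h: "hasAB (Einv i j) (E j i) W" and t: "terminal F"
  shows False
proof -
  have "hasAB (Einv i j) (E j i) F \<and> set F \<subseteq> Alph i j k"
  proof (rule reach_inv[OF r d A])
    show "hasAB (Einv i j) (E j i) W" using h .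
  next
    fix u x y v r assume "Rl i j k x y r" "hasAB (Einv i j) (E j i) (u @ x # y # v)"
    then show "hasAB (Einv i j) (E j i) (u @ r @ v)" using d unfolding Rl_def
      by (auto simp: hasAB_append)
  qed
  moreover obtain bs as where "F = bs @ as" "set bs \<subseteq> {E j i, E j k}" "set as \<subseteq> {Einv i j, Einv i k}"
    using terminal_split[OF d t] calculation by blast
  ultimately show False using d
    by (auto simp: hasAB_append dest: hasAB_notin1 hasAB_notin2)
qed

lemma caseA:
  assumes d: "distinct [i,j,k]" and r: "(astep sel)\<^sup>*\<^sup>* W F"
    and A: "set W \<subseteq> {Einv i k, E j i, E j k}" and t: "terminal F"
  shows "\<exists>bs. F = bs @ replicate (count_list W (Einv i k)) (Einv i k) \<and> set bs \<subseteq> {E j i, E j k}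
     \<and> count_list bs (E j i) = count_list W (E j i)
     \<and> count_list bs (E j k) = count_list W (E j k) + cntAB (Einv i k) (E j i) W"
proof -
  have A': "set W \<subseteq> Alph i j k" using A unfolding Alph_def by auto
  define P where "P w \<longleftrightarrow> set w \<subseteq> {Einv i k, E j i, E j k} \<and>
     count_list w (Einv i k) = count_list W (Einv i k) \<and> count_list w (E j i) = count_list W (E j i) \<and>
     count_list w (E j k) + cntAB (Einv i k) (E j i) w = count_list W (E j k) + cntAB (Einv i k) (E j i) W" for w
  have "P F \<and> set F \<subseteq> Alph i j k"
  proof (rule reach_inv[OF r d A'])
    show "P W" using A unfolding P_def by simp
  next
    fix u x y v r assume "Rl i j k x y r" "P (u @ x # y # v)"
    then show "P (u @ r @ v)" using d unfolding P_def Rl_def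
      by (auto simp: cntAB_append)
  qed
  then have PF: "P F" and AF: "set F \<subseteq> Alph i j k" by auto
  obtain bs as where h: "F = bs @ as" "set bs \<subseteq> {E j i, E j k}" "set as \<subseteq> {Einv i j, Einv i k}"
    using terminal_split[OF d t AF] by blast
  have as1: "set as \<subseteq> {Einv i k}" using PF h d unfolding P_def by auto
  have nb: "Einv i k \<notin> set bs" "E j i \<notin> set as" "E j k \<notin> set as" using h as1 d by auto
  have "as = replicate (count_list as (Einv i k)) (Einv i k)" using rep_of[OF as1] .
  moreover have "count_list as (Einv i k) = count_list W (Einv i k)"
    using PF h nb unfolding P_def by (simp add: cnt0)
  moreover have "cntAB (Einv i k) (E j i) F = 0"
    using h nb as1 by (simp add: cntAB_append cntAB_notin1 cntAB_notin2 cnt0)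
  ultimately show ?thesis using PF h nb unfolding P_def
    by (intro exI[of _ bs]) (simp add: cnt0)
qed

lemma caseB:
  assumes d: "distinct [i,j,k]" and r: "(astep sel)\<^sup>*\<^sup>* W F"
    and A: "set W \<subseteq> {Einv i j, Einv i k, E j k}" and t: "terminal F"
  shows "F = replicate (count_list W (E j k)) (E j k) @ phi (Einv i j) (Einv i k) (E j k) 0 W"
proof -
  have A': "set W \<subseteq> Alph i j k" using A unfolding Alph_def by auto
  define P where "P w \<longleftrightarrow> set w \<subseteq> {Einv i j, Einv i k, E j k} \<and>
     count_list w (E j k) = count_list W (E j k) \<and>
     phi (Einv i j) (Einv i k) (E j k) 0 w = phi (Einv i j) (Einv i k) (E j k) 0 W" for w
  have "P F \<and> set F \<subseteq> Alph i j k"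
  proof (rule reach_inv[OF r d A'])
    show "P W" using A unfolding P_def by simp
  next
    fix u x y v r assume "Rl i j k x y r" "P (u @ x # y # v)"
    then show "P (u @ r @ v)" using d unfolding P_def Rl_def
      by (auto simp: phi_append)
  qed
  then have PF: "P F" and AF: "set F \<subseteq> Alph i j k" by auto
  obtain bs as where h: "F = bs @ as" "set bs \<subseteq> {E j i, E j k}" "set as \<subseteq> {Einv i j, Einv i k}"
    using terminal_split[OF d t AF] by blast
  have bs1: "set bs \<subseteq> {E j k}" using PF h d unfolding P_def by auto
  have nb: "Einv i k \<notin> set bs" "Einv i j \<notin> set bs" "E j k \<notin> set as" using h bs1 d by auto
  have "bs = replicate (count_list bs (E j k)) (E j k)" using rep_of[OF bs1] .
  moreover have "count_list bs (E j k) = count_list W (E j k)"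
    using PF h nb unfolding P_def by (simp add: cnt0)
  moreover have "phi (Einv i j) (Einv i k) (E j k) 0 F = as"
    using h nb by (simp add: phi_append phi_noA phi_noB)
  ultimately show ?thesis using PF h unfolding P_def by simp
qed


lemma rule8_iff: "rule8 w w' \<longleftrightarrow> (\<exists>u a b c v. distinct [a,b,c] \<and>
    w = u @ E a b # E a c # v \<and> w' = u @ E a c # E a b # v)"
proof
  assume "rule8 w w'"
  then obtain p a b c where h: "distinct [a,b,c]" "Suc p < length w" "w ! p = E a b"
    "w ! Suc p = E a c" "w' = replace_at w p [E a c, E a b]" unfolding rule8_def by blast
  show "\<exists>u a b c v. distinct [a,b,c] \<and> w = u @ E a b # E a c # v \<and> w' = u @ E a c # E a b # v"
    using split_at[OF h(2)] h unfolding replace_at_def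
    by (intro exI[of _ "take p w"] exI[of _ a] exI[of _ b] exI[of _ c] exI[of _ "drop (Suc (Suc p)) w"]) simp
next
  assume "\<exists>u a b c v. distinct [a,b,c] \<and> w = u @ E a b # E a c # v \<and> w' = u @ E a c # E a b # v"
  then obtain u a b c v where h: "distinct [a,b,c]" "w = u @ E a b # E a c # v" "w' = u @ E a c # E a b # v"
    by blast
  show "rule8 w w'" unfolding rule8_def replace_at_def
    by (rule exI[of _ "length u"], rule exI[of _ a], rule exI[of _ b], rule exI[of _ c])
       (use h in \<open>auto simp: nth_append\<close>)
qed

lemma rule8_sym: "rule8 w w' \<Longrightarrow> rule8 w' w"
proof -
  assume "rule8 w w'"
  then obtain u a b c v where h: "distinct [a,b,c]" "w = u @ E a b # E a c # v" "w' = u @ E a c # E a b # v"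
    unfolding rule8_iff by blast
  have "distinct [a,c,b]" using h(1) by auto
  then show "rule8 w' w" unfolding rule8_iff using h by blast
qed

lemma rule8_cons: "rule8 w w' \<Longrightarrow> rule8 (z # w) (z # w')"
  unfolding rule8_iff by (metis append_Cons)

lemma rule8s_cons: "rule8\<^sup>*\<^sup>* w w' \<Longrightarrow> rule8\<^sup>*\<^sup>* (z # w) (z # w')"
  by (induction rule: rtranclp_induct) (auto intro: rtranclp.rtrancl_into_rtrancl rule8_cons)

lemma rule8s_sym: "rule8\<^sup>*\<^sup>* w w' \<Longrightarrow> rule8\<^sup>*\<^sup>* w' w"
  by (induction rule: rtranclp_induct) (auto intro: converse_rtranclp_into_rtranclp rule8_sym)

lemma bubble: "distinct [a,b,c] \<Longrightarrow>
   rule8\<^sup>*\<^sup>* (E a b # replicate n (E a c) @ s) (replicate n (E a c) @ E a b # s)"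
proof (induction n)
  case 0 then show ?case by simp
next
  case (Suc n)
  have st: "rule8 (E a b # E a c # (replicate n (E a c) @ s)) (E a c # E a b # (replicate n (E a c) @ s))"
    unfolding rule8_iff using Suc.prems by (intro exI[of _ "[]"]) auto
  have IH': "rule8\<^sup>*\<^sup>* (E a c # E a b # replicate n (E a c) @ s) (E a c # replicate n (E a c) @ E a b # s)"
    using rule8s_cons[OF Suc.IH[OF Suc.prems]] by simp
  have "rule8\<^sup>*\<^sup>* (E a b # E a c # (replicate n (E a c) @ s)) (E a c # replicate n (E a c) @ E a b # s)"
    using converse_rtranclp_into_rtranclp[OF st IH'] by simp
  then show ?case by simp
qed

lemma sort8: "distinct [a,b,c] \<Longrightarrow> set w \<subseteq> {E a c, E a b} \<Longrightarrow>
  rule8\<^sup>*\<^sup>* (w @ s) (replicate (count_list w (E a c)) (E a c) @ replicate (count_list w (E a b)) (E a b) @ s)"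
proof (induction w)
  case Nil then show ?case by simp
next
  case (Cons z w)
  have IH: "rule8\<^sup>*\<^sup>* (z # w @ s) (z # replicate (count_list w (E a c)) (E a c) @ replicate (count_list w (E a b)) (E a b) @ s)"
    using Cons by (intro rule8s_cons) auto
  show ?case
  proof (cases "z = E a c")
    case True
    have ne: "E a c \<noteq> E a b" using Cons.prems(1) by auto
    show ?thesis using IH True ne by simp
  next
    case False
    then have z: "z = E a b" using Cons.prems by auto
    have ne: "E a b \<noteq> E a c" using Cons.prems(1) by auto
    have bb: "rule8\<^sup>*\<^sup>* (E a b # replicate (count_list w (E a c)) (E a c) @ replicate (count_list w (E a b)) (E a b) @ s)
        (replicate (count_list w (E a c)) (E a c) @ E a b # replicate (count_list w (E a b)) (E a b) @ s)"
      by (rule bubble[OF Cons.prems(1)])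
    have "rule8\<^sup>*\<^sup>* (z # w @ s) (replicate (count_list w (E a c)) (E a c) @ E a b # replicate (count_list w (E a b)) (E a b) @ s)"
      using rtranclp_trans[OF IH[unfolded z] bb] z by simp
    then show ?thesis using z ne by simp
  qed
qed

lemma inv_letter_inv: "inv_letter (inv_letter x) = x" by (cases x) auto
lemma inv_inv: "inv_word (inv_word w) = w"
  unfolding inv_word_def by (simp add: rev_map inv_letter_inv comp_def)

theorem proposition3p1:
  fixes i j :: idx and S T :: word and sel :: "word \<Rightarrow> nat"
  assumes "i \<noteq> j"
    and "directed i S" and "directed j T"
    and "admissible_order sel"
  shows "(\<forall>F1 F2. factorization sel (inv_word S @ T) F1 \<and>
                  factorization sel (inv_word S @ T) F2 \<longrightarrow> eq8 F1 F2)
       \<and> (\<forall>F. factorization sel (inv_word S @ T) F \<longrightarrow>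
              (\<exists>T1 S1. F = T1 @ inv_word S1 \<and> directed i S1 \<and> directed j T1))"
proof -
  obtain k where d: "distinct [i,j,k]" using ex_third[OF assms(1)] by blast
  define W where "W = inv_word S @ T"
  have Sx: "x = E i j \<or> x = E i k" if "x \<in> set S" for x
  proof -
    have "\<exists>j'. j' \<noteq> i \<and> x = E i j'" using assms(2) that unfolding directed_def by (rule bspec)
    then obtain j' where "j' \<noteq> i" "x = E i j'" by (elim exE conjE)
    then show ?thesis using idx3[OF d, of j'] by auto
  qed
  have Tx: "x = E j i \<or> x = E j k" if "x \<in> set T" for x
  proof -
    have "\<exists>j'. j' \<noteq> j \<and> x = E j j'" using assms(3) that unfolding directed_def by (rule bspec)
    then obtain j' where "j' \<noteq> j" "x = E j j'" by (elim exE conjE)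
    then show ?thesis using idx3[OF d, of j'] by auto
  qed
  have setinv: "set (inv_word S) = inv_letter ` set S" unfolding inv_word_def by simp
  have SW: "set (inv_word S) \<subseteq> {Einv i j, Einv i k}"
  proof
    fix y assume "y \<in> set (inv_word S)"
    then obtain x where "x \<in> set S" "y = inv_letter x" unfolding setinv by blast
    then show "y \<in> {Einv i j, Einv i k}" using Sx by fastforce
  qed
  have TW: "set T \<subseteq> {E j i, E j k}" using Tx by auto
  have AW: "set W \<subseteq> Alph i j k" using SW TW unfolding W_def Alph_def by auto
  have shape: "\<exists>bs as. F = bs @ as \<and> set bs \<subseteq> {E j i, E j k} \<and> set as \<subseteq> {Einv i j, Einv i k}"
    if "factorization sel W F" for F
  proof -
    have r: "(astep sel)\<^sup>*\<^sup>* W F" and t: "terminal F" using that unfolding factorization_def by auto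
    have "True \<and> set F \<subseteq> Alph i j k" by (rule reach_inv[OF r d AW]) auto
    then show ?thesis using terminal_split[OF d t] by blast
  qed
  have part2: "\<exists>T1 S1. F = T1 @ inv_word S1 \<and> directed i S1 \<and> directed j T1"
    if fac: "factorization sel W F" for F
  proof -
    obtain bs as where h: "F = bs @ as" "set bs \<subseteq> {E j i, E j k}" "set as \<subseteq> {Einv i j, Einv i k}"
      using shape[OF fac] by blast
    have "directed i (inv_word as)" unfolding directed_def
    proof
      fix y assume "y \<in> set (inv_word as)"
      then obtain x where "x \<in> set as" "y = inv_letter x" unfolding inv_word_def by auto
      then show "\<exists>j'. j' \<noteq> i \<and> y = E i j'" using h(3) d by fastforce
    qed
    moreover have "directed j bs" unfolding directed_def
    proof
      fix y assume "y \<in> set bs"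
      then show "\<exists>j'. j' \<noteq> j \<and> y = E j j'" using h(2) d by fastforce
    qed
    moreover have "F = bs @ inv_word (inv_word as)" using h(1) by (simp add: inv_inv)
    ultimately show ?thesis by blast
  qed
  have part1: "eq8 F1 F2" if f1: "factorization sel W F1" and f2: "factorization sel W F2" for F1 F2
  proof -
    have r1: "(astep sel)\<^sup>*\<^sup>* W F1" and t1: "terminal F1" using f1 unfolding factorization_def by auto
    have r2: "(astep sel)\<^sup>*\<^sup>* W F2" and t2: "terminal F2" using f2 unfolding factorization_def by auto
    show ?thesis
    proof (cases "E i j \<in> set S")
      case False
      have "Einv i j \<notin> set (inv_word S)"
      proof
        assume "Einv i j \<in> set (inv_word S)"
        then obtain x where "x \<in> set S" "inv_letter x = Einv i j" unfolding setinv by auto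
        then show False using Sx False d by fastforce
      qed
      then have AW': "set W \<subseteq> {Einv i k, E j i, E j k}" using SW TW unfolding W_def by auto
      obtain bs1 where b1: "F1 = bs1 @ replicate (count_list W (Einv i k)) (Einv i k)" "set bs1 \<subseteq> {E j i, E j k}"
        "count_list bs1 (E j i) = count_list W (E j i)"
        "count_list bs1 (E j k) = count_list W (E j k) + cntAB (Einv i k) (E j i) W"
        using caseA[OF d r1 AW' t1] by blast
      obtain bs2 where b2: "F2 = bs2 @ replicate (count_list W (Einv i k)) (Einv i k)" "set bs2 \<subseteq> {E j i, E j k}"
        "count_list bs2 (E j i) = count_list W (E j i)"
        "count_list bs2 (E j k) = count_list W (E j k) + cntAB (Einv i k) (E j i) W"
        using caseA[OF d r2 AW' t2] by blast
      have d': "distinct [j,k,i]" using d by auto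
      have s1: "rule8\<^sup>*\<^sup>* F1 (replicate (count_list W (E j i)) (E j i) @ replicate (count_list W (E j k) + cntAB (Einv i k) (E j i) W) (E j k) @ replicate (count_list W (Einv i k)) (Einv i k))"
        using sort8[OF d', of bs1] b1 by auto
      have s2: "rule8\<^sup>*\<^sup>* F2 (replicate (count_list W (E j i)) (E j i) @ replicate (count_list W (E j k) + cntAB (Einv i k) (E j i) W) (E j k) @ replicate (count_list W (Einv i k)) (Einv i k))"
        using sort8[OF d', of bs2] b2 by auto
      show ?thesis unfolding eq8_def using s1 rule8s_sym[OF s2] by (rule rtranclp_trans)
    next
      case True
      show ?thesis
      proof (cases "E j i \<in> set T")
        case True2: True
        have "Einv i j \<in> set (inv_word S)" using True unfolding setinv by force
        then have "hasAB (Einv i j) (E j i) W" using True2 unfolding W_def by (simp add: hasAB_append)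
        then show ?thesis using caseC[OF d r1 AW _ t1] by blast
      next
        case False
        then have AW': "set W \<subseteq> {Einv i j, Einv i k, E j k}" using SW TW unfolding W_def by auto
        have "F1 = F2" using caseB[OF d r1 AW' t1] caseB[OF d r2 AW' t2] by simp
        then show ?thesis unfolding eq8_def by simp
      qed
    qed
  qed
  show ?thesis using part1 part2 unfolding W_def by blast
qed

end
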